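(* Let $Z$ be a random vector in $\mathbb{R}^d$ and $X_\ell, X_{\ell-1}$ discrete random variables (finite or countable support) such that $\|Z\|_2 \le B$ almost surely for some $B \ge 0$, and such that $X_{\ell-1} \to X_\ell \to Z$ is a Markov chain (i.e. $Z$ and $X_{\ell-1}$ are conditionally independent given $X_\ell$). Then $$\mathbb{E}\big[\|\mathbb{E}[Z\mid X_\ell] - \mathbb{E}[Z\mid X_{\ell-1}]\|_2^2\big] \le 2B^2\, H(X_\ell \mid X_{\ell-1}),$$ where $H(\cdot\mid\cdot)$ denotes conditional Shannon entropy measured in nats. *)

theory Defs
  imports "HOL-Probability.Probability"
begin

text \<open>Elementary conditional expectation of a vector-valued random variable Z given a
discrete random variable X, evaluated at the outcome w:
E[Z | X = X w] = E[Z 1{X = X w}] / P(X = X w)  (0 on null atoms, which is irrelevant a.s.).\<close>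
definition cexp_disc :: "'a measure \<Rightarrow> ('a \<Rightarrow> 'v::{banach,second_countable_topology}) \<Rightarrow> ('a \<Rightarrow> 'b) \<Rightarrow> 'a \<Rightarrow> 'v" where
  "cexp_disc M Z X w =
     (let A = {v \<in> space M. X v = X w}
      in if measure M A = 0 then 0
         else (1 / measure M A) *\<^sub>R (\<integral>v. indicator A v *\<^sub>R Z v \<partial>M))"

definition markov_chain3 :: "'a measure \<Rightarrow> ('a \<Rightarrow> 'c) \<Rightarrow> ('a \<Rightarrow> 'b) \<Rightarrow> ('a \<Rightarrow> 'v::topological_space) \<Rightarrow> bool" where
  "markov_chain3 M X0 X1 Z \<longleftrightarrow>
     (\<forall>x0 x1 A. A \<in> sets borel \<longrightarrow>
        measure M {w \<in> space M. Z w \<in> A \<and> X0 w = x0 \<and> X1 w = x1} * measure M {w \<in> space M. X1 w = x1}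
        = measure M {w \<in> space M. Z w \<in> A \<and> X1 w = x1} * measure M {w \<in> space M. X0 w = x0 \<and> X1 w = x1})"

text \<open>Conditional Shannon entropy H(X | Y) in nats of discrete random variables,
H(X|Y) = sum_{x,y} p(x,y) ln (p(y) / p(x,y)), as an extended nonnegative real
(it may be infinite for countably infinite supports).\<close>
definition cond_entropy_disc :: "'a measure \<Rightarrow> ('a \<Rightarrow> 'b) \<Rightarrow> ('a \<Rightarrow> 'c) \<Rightarrow> ennreal" where
  "cond_entropy_disc M X Y =
     (\<integral>\<^sup>+ xy. ennreal
        (let pxy = measure M {w \<in> space M. X w = fst xy \<and> Y w = snd xy};
             py = measure M {w \<in> space M. Y w = snd xy}
         in if pxy = 0 then 0 else pxy * ln (py / pxy)) \<partial>count_space UNIV)"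

end

theory Submission
  imports Defs
begin

lemma ln_bound: fixes t :: real assumes "0 < t" "t \<le> 1" shows "ln t \<le> 2*(t-1)/(t+1)"
proof -
  let ?g = "\<lambda>x::real. 2*(x-1)/(x+1) - ln x"
  have "?g t \<ge> ?g 1"
  proof (rule DERIV_nonpos_imp_nonincreasing[OF assms(2)])
    fix x :: real assume x: "t \<le> x" "x \<le> 1"
    hence xp: "x > 0" using assms by linarith
    have "DERIV ?g x :> (2*(x+1) - 2*(x-1)) / (x+1)^2 - 1/x"
      using xp by (auto intro!: derivative_eq_intros simp: power2_eq_square)
    moreover have "(2*(x+1) - 2*(x-1)) / (x+1)^2 - 1/x \<le> 0"
    proof -
      have "(2*(x+1) - 2*(x-1)) / (x+1)^2 = 4/(x+1)^2" by simp
      moreover have "4/(x+1)^2 \<le> 1/x"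
      proof -
        have "4*x \<le> (x+1)^2" using zero_le_power2[of "x-1"] by (simp add: power2_eq_square algebra_simps)
        thus ?thesis using xp by (simp add: divide_simps)
      qed
      ultimately show ?thesis by simp
    qed
    ultimately show "\<exists>y. DERIV ?g x :> y \<and> y \<le> 0" by blast
  qed
  thus ?thesis by simp
qed

lemma sq_bound: fixes t :: real assumes "0 < t" "t \<le> 1" shows "2*(1-t)^2 \<le> - ln t"
proof -
  have "2*(1-t)^2 \<le> 2*(1-t)/(1+t)"
  proof -
    have h: "(1-t)*(1+t) \<le> 1" by (simp add: algebra_simps)
    have "2*(1-t)^2 * (1+t) = (2*(1-t)) * ((1-t)*(1+t))" by (simp add: power2_eq_square)
    also have "\<dots> \<le> (2*(1-t)) * 1" using assms by (intro mult_left_mono[OF h]) auto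
    finally have "2*(1-t)^2 * (1+t) \<le> 2*(1-t)" by simp
    thus ?thesis using assms by (simp add: field_simps)
  qed
  also have "\<dots> \<le> - ln t"
  proof -
    have "2*(1-t)/(1+t) = - (2*(t-1)/(t+1))" using assms by (simp add: field_simps)
    thus ?thesis using ln_bound[OF assms] by linarith
  qed
  finally show ?thesis .
qed
lemma nn_integral_discrete:
  fixes X :: "'a \<Rightarrow> 'd::countable" and f :: "'d \<Rightarrow> ennreal"
  assumes X: "X \<in> measurable M (count_space UNIV)"
  shows "(\<integral>\<^sup>+ w. f (X w) \<partial>M) = (\<integral>\<^sup>+ x. f x * emeasure M {w \<in> space M. X w = x} \<partial>count_space UNIV)"
proof -
  have meas: "{w \<in> space M. X w = x} \<in> sets M" for x
    using X by measurable
  have "(\<integral>\<^sup>+ w. f (X w) \<partial>M) = (\<integral>\<^sup>+ w. \<integral>\<^sup>+ x. f x * indicator {w \<in> space M. X w = x} w \<partial>count_space UNIV \<partial>M)"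
  proof (rule nn_integral_cong)
    fix w assume w: "w \<in> space M"
    have "(\<integral>\<^sup>+ x. f x * indicator {w \<in> space M. X w = x} w \<partial>count_space UNIV)
        = (\<integral>\<^sup>+ x. f x * indicator {X w} x \<partial>count_space UNIV)"
      using w by (intro nn_integral_cong) (auto split: split_indicator)
    also have "\<dots> = f (X w)" by simp
    finally show "f (X w) = (\<integral>\<^sup>+ x. f x * indicator {w \<in> space M. X w = x} w \<partial>count_space UNIV)" by simp
  qed
  also have "\<dots> = (\<integral>\<^sup>+ x. \<integral>\<^sup>+ w. f x * indicator {w \<in> space M. X w = x} w \<partial>M \<partial>count_space UNIV)"
    using meas by (intro nn_integral_count_space_nn_integral) auto
  also have "\<dots> = (\<integral>\<^sup>+ x. f x * emeasure M {w \<in> space M. X w = x} \<partial>count_space UNIV)"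
    by (intro nn_integral_cong nn_integral_cmult_indicator meas)
  finally show ?thesis .
qed

lemma norm_int_ind_bound:
  fixes Z :: "'a \<Rightarrow> 'v::{banach,second_countable_topology}"
  assumes "finite_measure M" "Z \<in> borel_measurable M" "AE w in M. norm (Z w) \<le> B" "A \<in> sets M"
  shows "norm (\<integral>v. indicator A v *\<^sub>R Z v \<partial>M) \<le> B * measure M A"
proof -
  interpret finite_measure M by fact
  have emeasure_real_less_top: "emeasure M A < \<infinity>" by (simp add: less_top[symmetric])
  have iZ: "integrable M Z" using assms by (intro integrable_const_bound[of _ B]) auto
  have "norm (\<integral>v. indicator A v *\<^sub>R Z v \<partial>M) \<le> (\<integral>v. norm (indicator A v *\<^sub>R Z v) \<partial>M)"
    by (rule integral_norm_bound)
  also have "\<dots> \<le> (\<integral>v. B * indicator A v \<partial>M)"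
    using assms iZ integrable_mult_indicator[OF assms(4) integrable_norm[OF iZ]]
      integrable_real_indicator[OF assms(4) emeasure_real_less_top]
    by (intro integral_mono_AE) (auto intro!: integrable_mult_indicator integrable_norm split: split_indicator elim!: eventually_mono)
  also have "\<dots> = B * measure M A" using assms by simp
  finally show ?thesis .
qed
lemma markov_integral:
  fixes M :: "'a measure" and Z :: "'a \<Rightarrow> real ^ 'n"
    and X1 :: "'a \<Rightarrow> 'b::countable" and X0 :: "'a \<Rightarrow> 'c::countable"
  assumes P: "prob_space M"
    and Zm: "Z \<in> borel_measurable M"
    and X1m: "X1 \<in> measurable M (count_space UNIV)"
    and X0m: "X0 \<in> measurable M (count_space UNIV)"
    and mc: "markov_chain3 M X0 X1 Z"
    and pp: "measure M {w \<in> space M. X1 w = x1} > 0"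
  shows "(\<integral>v. indicator {w \<in> space M. X1 w = x1 \<and> X0 w = x0} v *\<^sub>R Z v \<partial>M)
     = (measure M {w \<in> space M. X1 w = x1 \<and> X0 w = x0} / measure M {w \<in> space M. X1 w = x1})
        *\<^sub>R (\<integral>v. indicator {w \<in> space M. X1 w = x1} v *\<^sub>R Z v \<partial>M)"
proof -
  interpret prob_space M by fact
  define E1 where "E1 = {w \<in> space M. X1 w = x1 \<and> X0 w = x0}"
  define E2 where "E2 = {w \<in> space M. X1 w = x1}"
  define r where "r = measure M E1"
  define p where "p = measure M E2"
  define c where "c = r / p"
  have c0: "c \<ge> 0" unfolding c_def r_def p_def by simp
  have E1s: "E1 \<in> sets M" unfolding E1_def using X1m X0m by measurable
  have E2s: "E2 \<in> sets M" unfolding E2_def using X1m by measurable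
  define N1 where "N1 = density M (\<lambda>x. ennreal (indicator E1 x))"
  define N2 where "N2 = density M (\<lambda>x. ennreal (indicator E2 x))"
  have ZN1: "Z \<in> borel_measurable N1" unfolding N1_def
    using measurable_cong_sets[of "density M (\<lambda>x. ennreal (indicator E1 x))" M borel borel] Zm by simp
  have ZN2: "Z \<in> borel_measurable N2" unfolding N2_def
    using measurable_cong_sets[of "density M (\<lambda>x. ennreal (indicator E2 x))" M borel borel] Zm by simp
  define D1 where "D1 = distr N1 borel Z"
  define D2 where "D2 = distr N2 borel Z"
  have eqD: "D1 = density D2 (\<lambda>_. ennreal c)"
  proof (rule measure_eqI)
    show "sets D1 = sets (density D2 (\<lambda>_. ennreal c))" unfolding D1_def D2_def by simp
  next
    fix A assume "A \<in> sets D1"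
    hence A: "A \<in> sets borel" unfolding D1_def by simp
    have ZA: "Z -` A \<inter> space M \<in> sets M" using Zm A by (rule measurable_sets)
    have "emeasure D1 A = emeasure M (E1 \<inter> (Z -` A \<inter> space M))"
      unfolding D1_def using ZN1 A
      by (simp add: emeasure_distr N1_def ennreal_indicator emeasure_restricted[OF E1s ZA])
    also have "E1 \<inter> (Z -` A \<inter> space M) = {w \<in> space M. Z w \<in> A \<and> X0 w = x0 \<and> X1 w = x1}"
      unfolding E1_def by auto
    finally have e1: "emeasure D1 A = ennreal (measure M {w \<in> space M. Z w \<in> A \<and> X0 w = x0 \<and> X1 w = x1})"
      by (simp add: emeasure_eq_measure)
    have "emeasure D2 A = emeasure M (E2 \<inter> (Z -` A \<inter> space M))"
      unfolding D2_def using ZN2 A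
      by (simp add: emeasure_distr N2_def ennreal_indicator emeasure_restricted[OF E2s ZA])
    also have "E2 \<inter> (Z -` A \<inter> space M) = {w \<in> space M. Z w \<in> A \<and> X1 w = x1}"
      unfolding E2_def by auto
    finally have e2: "emeasure D2 A = ennreal (measure M {w \<in> space M. Z w \<in> A \<and> X1 w = x1})"
      by (simp add: emeasure_eq_measure)
    have "measure M {w \<in> space M. Z w \<in> A \<and> X0 w = x0 \<and> X1 w = x1} * p
        = measure M {w \<in> space M. Z w \<in> A \<and> X1 w = x1} * r"
    proof -
      have "{w \<in> space M. X0 w = x0 \<and> X1 w = x1} = E1" unfolding E1_def by auto
      moreover note mc[unfolded markov_chain3_def, rule_format, of A x0 x1, OF A]
      ultimately show ?thesis unfolding p_def r_def E2_def by simp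
    qed
    hence "measure M {w \<in> space M. Z w \<in> A \<and> X0 w = x0 \<and> X1 w = x1}
        = c * measure M {w \<in> space M. Z w \<in> A \<and> X1 w = x1}"
      using pp unfolding c_def p_def E2_def by (simp add: field_simps)
    hence "emeasure D1 A = ennreal c * emeasure D2 A"
      using e1 e2 c0 by (simp add: ennreal_mult)
    also have "\<dots> = emeasure (density D2 (\<lambda>_. ennreal c)) A"
      using A by (simp add: emeasure_density_const D2_def)
    finally show "emeasure D1 A = emeasure (density D2 (\<lambda>_. ennreal c)) A" .
  qed
  have i1: "(\<integral>x. x \<partial>D1) = (\<integral>v. indicator E1 v *\<^sub>R Z v \<partial>M)"
  proof -
    have "(\<integral>x. x \<partial>D1) = (\<integral>v. Z v \<partial>N1)" unfolding D1_def using ZN1 by (simp add: integral_distr)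
    also have "\<dots> = (\<integral>v. indicator E1 v *\<^sub>R Z v \<partial>M)" unfolding N1_def
      by (rule integral_density) (use Zm E1s in auto)
    finally show ?thesis .
  qed
  have i2: "(\<integral>x. x \<partial>D2) = (\<integral>v. indicator E2 v *\<^sub>R Z v \<partial>M)"
  proof -
    have "(\<integral>x. x \<partial>D2) = (\<integral>v. Z v \<partial>N2)" unfolding D2_def using ZN2 by (simp add: integral_distr)
    also have "\<dots> = (\<integral>v. indicator E2 v *\<^sub>R Z v \<partial>M)" unfolding N2_def
      by (rule integral_density) (use Zm E2s in auto)
    finally show ?thesis .
  qed
  have "(\<integral>x. x \<partial>D1) = (\<integral>x. c *\<^sub>R x \<partial>D2)"
    unfolding eqD using c0 by (subst integral_density) (auto simp: D2_def)
  also have "\<dots> = c *\<^sub>R (\<integral>x. x \<partial>D2)" by simp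
  finally show ?thesis using i1 i2 unfolding c_def r_def p_def E1_def E2_def by simp
qed
theorem theorem5:
  fixes M :: "'a measure" and Z :: "'a \<Rightarrow> real ^ 'n"
    and X1 :: "'a \<Rightarrow> 'b::countable" and X0 :: "'a \<Rightarrow> 'c::countable" and B :: real
  assumes "prob_space M"
    and "Z \<in> borel_measurable M"
    and "X1 \<in> measurable M (count_space UNIV)"
    and "X0 \<in> measurable M (count_space UNIV)"
    and "B \<ge> 0"
    and "AE w in M. norm (Z w) \<le> B"
    and "markov_chain3 M X0 X1 Z"
  shows "(\<integral>\<^sup>+ w. ennreal ((norm (cexp_disc M Z X1 w - cexp_disc M Z X0 w))\<^sup>2) \<partial>M)
           \<le> ennreal (2 * B\<^sup>2) * cond_entropy_disc M X1 X0"
proof -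
  note P = assms(1) and Zm = assms(2) and X1m = assms(3) and X0m = assms(4)
    and B0 = assms(5) and ZB = assms(6) and mc = assms(7)
  interpret prob_space M by fact
  define p where "p a = measure M {w \<in> space M. X1 w = a}" for a
  define q where "q b = measure M {w \<in> space M. X0 w = b}" for b
  define r where "r a b = measure M {w \<in> space M. X1 w = a \<and> X0 w = b}" for a b
  define S where "S a = (\<integral>v. indicator {w \<in> space M. X1 w = a} v *\<^sub>R Z v \<partial>M)" for a
  define T where "T b = (\<integral>v. indicator {w \<in> space M. X0 w = b} v *\<^sub>R Z v \<partial>M)" for b
  define mu where "mu a = (if p a = 0 then 0 else (1 / p a) *\<^sub>R S a)" for a
  define nu where "nu b = (if q b = 0 then 0 else (1 / q b) *\<^sub>R T b)" for b
  have c1: "cexp_disc M Z X1 w = mu (X1 w)" for w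
    by (simp add: cexp_disc_def mu_def p_def S_def Let_def)
  have c0: "cexp_disc M Z X0 w = nu (X0 w)" for w
    by (simp add: cexp_disc_def nu_def q_def T_def Let_def)
  have iZ: "integrable M Z" using Zm ZB by (intro integrable_const_bound[of _ B]) auto
  have s1: "{w \<in> space M. X1 w = a} \<in> sets M" for a using X1m by measurable
  have s0: "{w \<in> space M. X0 w = b} \<in> sets M" for b using X0m by measurable
  have key: "norm (mu a - nu b) \<le> 2 * B * (1 - r a b / q b)" if R: "r a b > 0" for a b
  proof -
    define E1 where "E1 = {w \<in> space M. X1 w = a \<and> X0 w = b}"
    define E3 where "E3 = {w \<in> space M. X0 w = b \<and> X1 w \<noteq> a}"
    have E1s: "E1 \<in> sets M" unfolding E1_def using X1m X0m by measurable
    have E3s: "E3 \<in> sets M" unfolding E3_def using X1m X0m by measurable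
    have "r a b \<le> p a" unfolding r_def p_def using s1 by (intro finite_measure_mono) auto
    hence pa: "p a > 0" using R by linarith
    have "r a b \<le> q b" unfolding r_def q_def using s0 by (intro finite_measure_mono) auto
    hence qb: "q b > 0" using R by linarith
    have mua: "norm (mu a) \<le> B"
    proof -
      have "norm (S a) \<le> B * p a" unfolding S_def p_def
        by (rule norm_int_ind_bound[OF _ Zm ZB s1]) (rule finite_measure_axioms)
      thus ?thesis using pa by (simp add: mu_def field_simps)
    qed
    have U: "(\<integral>v. indicator E1 v *\<^sub>R Z v \<partial>M) = r a b *\<^sub>R mu a"
      using markov_integral[OF P Zm X1m X0m mc, of a b] pa
      unfolding E1_def r_def mu_def p_def S_def by simp
    have W: "norm (\<integral>v. indicator E3 v *\<^sub>R Z v \<partial>M) \<le> B * measure M E3"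
      by (rule norm_int_ind_bound[OF _ Zm ZB E3s]) (rule finite_measure_axioms)
    have dU: "{w \<in> space M. X0 w = b} = E1 \<union> E3" "E1 \<inter> E3 = {}"
      unfolding E1_def E3_def by auto
    have mE3: "measure M E3 = q b - r a b"
      unfolding q_def r_def dU(1) using finite_measure_Union[OF E1s E3s dU(2)]
      by (simp add: E1_def)
    have "T b = (\<integral>v. indicator E1 v *\<^sub>R Z v + indicator E3 v *\<^sub>R Z v \<partial>M)"
      unfolding T_def dU(1)
      by (intro Bochner_Integration.integral_cong refl) (use dU(2) in \<open>auto split: split_indicator\<close>)
    also have "\<dots> = (\<integral>v. indicator E1 v *\<^sub>R Z v \<partial>M) + (\<integral>v. indicator E3 v *\<^sub>R Z v \<partial>M)"
      by (intro Bochner_Integration.integral_add integrable_mult_indicator E1s E3s iZ)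
    finally have Tb: "T b = r a b *\<^sub>R mu a + (\<integral>v. indicator E3 v *\<^sub>R Z v \<partial>M)" using U by simp
    define Wv where "Wv = (\<integral>v. indicator E3 v *\<^sub>R Z v \<partial>M)"
    have "mu a - nu b = (1 / q b) *\<^sub>R ((q b - r a b) *\<^sub>R mu a - Wv)"
      using qb unfolding nu_def Tb Wv_def by (simp add: algebra_simps)
    hence "norm (mu a - nu b) = (1 / q b) * norm ((q b - r a b) *\<^sub>R mu a - Wv)"
      using qb by simp
    also have "\<dots> \<le> (1 / q b) * ((q b - r a b) * B + B * (q b - r a b))"
    proof (intro mult_left_mono)
      have "norm ((q b - r a b) *\<^sub>R mu a - Wv) \<le> norm ((q b - r a b) *\<^sub>R mu a) + norm Wv"
        by (rule norm_triangle_ineq4)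
      also have "norm ((q b - r a b) *\<^sub>R mu a) \<le> (q b - r a b) * B"
        using mua \<open>r a b \<le> q b\<close> by (simp add: mult_left_mono)
      also have "norm Wv \<le> B * (q b - r a b)" using W mE3 unfolding Wv_def by simp
      finally show "norm ((q b - r a b) *\<^sub>R mu a - Wv) \<le> (q b - r a b) * B + B * (q b - r a b)"
        by simp
    qed (use qb in simp)
    also have "\<dots> = 2 * B * (1 - r a b / q b)" using qb by (simp add: field_simps)
    finally show ?thesis .
  qed
  have pm: "(\<lambda>w. (X1 w, X0 w)) \<in> measurable M (count_space UNIV)"
  proof (subst measurable_count_space_eq2_countable, safe)
    fix a b
    have "(\<lambda>w. (X1 w, X0 w)) -` {(a, b)} \<inter> space M = {w \<in> space M. X1 w = a \<and> X0 w = b}" by auto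
    also have "\<dots> \<in> sets M" using X1m X0m by measurable
    finally show "(\<lambda>w. (X1 w, X0 w)) -` {(a, b)} \<inter> space M \<in> sets M" .
  qed auto
  define F where "F xy = ennreal ((norm (mu (fst xy) - nu (snd xy)))\<^sup>2)" for xy :: "'b \<times> 'c"
  define G where "G xy = (let pxy = measure M {w \<in> space M. X1 w = fst xy \<and> X0 w = snd xy};
             py = measure M {w \<in> space M. X0 w = snd xy}
         in if pxy = 0 then 0 else pxy * ln (py / pxy))" for xy :: "'b \<times> 'c"
  have "(\<integral>\<^sup>+ w. ennreal ((norm (cexp_disc M Z X1 w - cexp_disc M Z X0 w))\<^sup>2) \<partial>M)
      = (\<integral>\<^sup>+ w. F (X1 w, X0 w) \<partial>M)" by (simp add: c1 c0 F_def)
  also have "\<dots> = (\<integral>\<^sup>+ xy. F xy * emeasure M {w \<in> space M. (X1 w, X0 w) = xy} \<partial>count_space UNIV)"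
    by (rule nn_integral_discrete[OF pm])
  also have "\<dots> \<le> (\<integral>\<^sup>+ xy. ennreal (2 * B\<^sup>2) * ennreal (G xy) \<partial>count_space UNIV)"
  proof (rule nn_integral_mono)
    fix xy :: "'b \<times> 'c"
    obtain a b where xy: "xy = (a, b)" by (cases xy)
    have em: "emeasure M {w \<in> space M. (X1 w, X0 w) = xy} = ennreal (r a b)"
      unfolding xy r_def by (simp add: emeasure_eq_measure)
    have Gab: "G xy = (if r a b = 0 then 0 else r a b * ln (q b / r a b))"
      unfolding G_def xy r_def q_def by (simp add: Let_def)
    show "F xy * emeasure M {w \<in> space M. (X1 w, X0 w) = xy} \<le> ennreal (2 * B\<^sup>2) * ennreal (G xy)"
    proof (cases "r a b = 0")
      case True
      thus ?thesis using em by simp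
    next
      case False
      have "r a b \<ge> 0" unfolding r_def by simp
      hence R: "r a b > 0" using False by linarith
      have "r a b \<le> q b" unfolding r_def q_def using s0 by (intro finite_measure_mono) auto
      hence qb: "q b > 0" using R by linarith
      define t where "t = r a b / q b"
      have t: "0 < t" "t \<le> 1" unfolding t_def using R qb \<open>r a b \<le> q b\<close> by auto
      have lnq: "ln (q b / r a b) = - ln t" unfolding t_def using R qb by (simp add: ln_div)
      have "(norm (mu a - nu b))\<^sup>2 \<le> (2 * B * (1 - t))\<^sup>2"
        using key[OF R] unfolding t_def by (intro power_mono) auto
      also have "\<dots> = 2 * B\<^sup>2 * (2 * (1 - t)\<^sup>2)" by (simp add: power_mult_distrib)
      also have "\<dots> \<le> 2 * B\<^sup>2 * (- ln t)" using sq_bound[OF t] by (intro mult_left_mono) auto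
      finally have n2: "(norm (mu a - nu b))\<^sup>2 \<le> 2 * B\<^sup>2 * ln (q b / r a b)" using lnq by simp
      have "F xy * emeasure M {w \<in> space M. (X1 w, X0 w) = xy} = ennreal ((norm (mu a - nu b))\<^sup>2 * r a b)"
        using R unfolding em F_def xy by (simp add: ennreal_mult r_def emeasure_eq_measure)
      also have "\<dots> \<le> ennreal (2 * B\<^sup>2 * (r a b * ln (q b / r a b)))"
        using mult_right_mono[OF n2, of "r a b"] R by (intro ennreal_leI) (simp add: algebra_simps)
      also have "\<dots> = ennreal (2 * B\<^sup>2) * ennreal (G xy)"
      proof -
        have "ln (q b / r a b) \<ge> 0" using lnq t by simp
        thus ?thesis using Gab False R by (simp add: ennreal_mult)
      qed
      finally show ?thesis .
    qed
  qed
  also have "\<dots> = ennreal (2 * B\<^sup>2) * (\<integral>\<^sup>+ xy. ennreal (G xy) \<partial>count_space UNIV)"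
    by (rule nn_integral_cmult) simp
  also have "\<dots> = ennreal (2 * B\<^sup>2) * cond_entropy_disc M X1 X0"
    unfolding cond_entropy_disc_def G_def ..
  finally show ?thesis .
qed

end
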